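(* For every $B\in B_{2n}(P_{2n})$ (i.e. every lower unitriangular symplectic $2n\times 2n$ matrix over $\mathbb{F}$), $$B=S_{2n,V_n(B)e_{n,1},1}\,S_{2n,V_n(B)e_{n,2},2}\cdots S_{2n,V_n(B)e_{n,n},n}.$$
   Context: $\mathbb{F}$ is the field with two elements, $e_{N,i}$ the $i$-th standard basis column vector of $\mathbb{F}^N$, $I_N$ the identity, $[N]=\{1,\dots,N\}$. $R_{2n}=\sum_{i=1}^{2n}e_{2n,i}e_{2n,2n+1-i}^{\top}$; $\mathrm{Sp}_{2n}=\{C\in\mathbb{F}^{2n\times2n}:C^{\top}R_{2n}C=R_{2n}\}$. $P_{2n}=\{(i,j):i,j\in[2n],i>j\}$ and $B_{2n}(P_{2n})=\big(I_{2n}+\mathrm{span}\{e_{2n,i}e_{2n,j}^{\top}:(i,j)\in P_{2n}\}\big)\cap\mathrm{Sp}_{2n}$. For $i\in[2n]$ and $v=\sum_j v_je_{2n,j}\in\mathbb{F}^{2n}$ with $v_i=0$, $S_{2n,v,i}=I_{2n}+v e_{2n,i}^{\top}+R_{2n}e_{2n,i}v^{\top}R_{2n}+v_{2n+1-i}e_{2n,2n+1-i}e_{2n,i}^{\top}$. $V_n:\mathbb{F}^{2n\times2n}\to\mathbb{F}^{2n\times n}$ is the linear map $V_n(B)=\sum_{j=1}^n\sum_{i=j+1}^{2n+1-j}e_{2n,i}e_{2n,i}^{\top}Be_{2n,j}e_{n,j}^{\top}$ (so $V_n(B)e_{n,j}$ is the part of column $j$ of $B$ in rows $j+1,\dots,2n+1-j$,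 and has zero $j$-th entry). *)

theory Defs
  imports "HOL-Library.Z2" "Jordan_Normal_Form.Matrix"
begin

text \<open>Matrices over the field with two elements (type bit). Indices of the
paper are 1-based; Jordan_Normal_Form matrices are 0-based, so paper entry
(i,j) is A $$ (i-1, j-1).\<close>

definition stdvec :: "nat \<Rightarrow> nat \<Rightarrow> bit mat" where
  "stdvec N i = mat N 1 (\<lambda>(r, c). if r + 1 = i then 1 else 0)"

text \<open>R_N = sum_{i=1}^N e_{N,i} e_{N,N+1-i}^T, i.e. the anti-identity.\<close>
definition Rmat :: "nat \<Rightarrow> bit mat" where
  "Rmat N = mat N N (\<lambda>(r, c). if (r + 1) + (c + 1) = N + 1 then 1 else 0)"

definition Sp :: "nat \<Rightarrow> bit mat set" where
  "Sp N = {C \<in> carrier_mat N N. transpose_mat C * Rmat N * C = Rmat N}"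

text \<open>B_N(P_N): identity plus span of e_i e_j^T with i > j, intersected with Sp_N
(N = 2n).\<close>
definition BP :: "nat \<Rightarrow> bit mat set" where
  "BP N = {C \<in> carrier_mat N N.
      (\<forall>i<N. \<forall>j<N. (i = j \<longrightarrow> C $$ (i, j) = 1) \<and> (i < j \<longrightarrow> C $$ (i, j) = 0))} \<inter> Sp N"

definition Smat :: "nat \<Rightarrow> bit mat \<Rightarrow> nat \<Rightarrow> bit mat" where
  "Smat N v i = one_mat N + v * transpose_mat (stdvec N i)
     + Rmat N * stdvec N i * transpose_mat v * Rmat N
     + (v $$ (N - i, 0)) \<cdot>\<^sub>m (stdvec N (N + 1 - i) * transpose_mat (stdvec N i))"

text \<open>V_n(B) = sum_{j=1}^n sum_{i=j+1}^{2n+1-j} e_i e_i^T B e_j e_{n,j}^T :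
entry (i,j) (1-based) is B_{ij} if j+1 <= i <= 2n+1-j, else 0.\<close>
definition Vmap :: "nat \<Rightarrow> bit mat \<Rightarrow> bit mat" where
  "Vmap n B = mat (2 * n) n (\<lambda>(r, c).
      if c + 2 \<le> r + 1 \<and> r + 1 \<le> 2 * n + 1 - (c + 1) then B $$ (r, c) else 0)"

fun ordprod :: "nat \<Rightarrow> (nat \<Rightarrow> bit mat) \<Rightarrow> nat \<Rightarrow> bit mat" where
  "ordprod N F 0 = one_mat N"
| "ordprod N F (Suc k) = ordprod N F k * F (Suc k)"

end

theory Submission
  imports Defs
begin

declare add_bit_eq_xor[simp del] mult_bit_eq_and[simp del]

lemma bit_add_self[simp]: "(x::bit) + x = 0"
  by (simp add: add_bit_eq_xor)
lemma bit_add_self2[simp]: "(x::bit) + (x + y) = y"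
  by (simp add: add.assoc[symmetric])

lemma mult_entry:
  assumes "A \<in> carrier_mat a b" "B \<in> carrier_mat b c" "i < a" "j < c"
  shows "(A * B) $$ (i, j) = (\<Sum>k<b. A $$ (i, k) * B $$ (k, j))"
  using assms by (simp add: scalar_prod_def lessThan_atLeast0)

lemma sum_delta_gen:
  fixes f :: "nat \<Rightarrow> 'a::comm_monoid_add"
  assumes "\<And>l. l < N \<Longrightarrow> l \<noteq> a \<Longrightarrow> f l = 0" "a < N"
  shows "(\<Sum>l<N. f l) = f a"
proof -
  have "(\<Sum>l<N. f l) = (\<Sum>l<N. if l = a then f a else 0)"
    by (rule sum.cong) (use assms in auto)
  also have "\<dots> = f a" using assms by simp
  finally show ?thesis .
qed

lemma stdvec_carrier[simp]: "stdvec N i \<in> carrier_mat N 1"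
  by (simp add: stdvec_def)
lemma stdvec_dims[simp]: "dim_row (stdvec N i) = N" "dim_col (stdvec N i) = 1"
  by (simp_all add: stdvec_def)
lemma stdvec_idx[simp]: "r < N \<Longrightarrow> stdvec N i $$ (r, 0) = (if r + 1 = i then 1 else 0)"
  by (simp add: stdvec_def)
lemma Rmat_carrier[simp]: "Rmat N \<in> carrier_mat N N"
  by (simp add: Rmat_def)
lemma Rmat_dims[simp]: "dim_row (Rmat N) = N" "dim_col (Rmat N) = N"
  by (simp_all add: Rmat_def)
lemma Rmat_idx[simp]: "r < N \<Longrightarrow> c < N \<Longrightarrow> Rmat N $$ (r, c) = (if r + c + 1 = N then 1 else 0)"
  by (simp add: Rmat_def)

lemma Rmat_left:
  assumes "X \<in> carrier_mat N k" "r < N" "c < k"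
  shows "(Rmat N * X) $$ (r, c) = X $$ (N - 1 - r, c)"
proof -
  have "(Rmat N * X) $$ (r, c) = (\<Sum>l<N. Rmat N $$ (r, l) * X $$ (l, c))"
    by (rule mult_entry) (use assms in auto)
  also have "\<dots> = Rmat N $$ (r, N - 1 - r) * X $$ (N - 1 - r, c)"
    by (rule sum_delta_gen) (use assms in auto)
  finally show ?thesis using assms by simp
qed

lemma Rmat_right:
  assumes "X \<in> carrier_mat k N" "r < k" "c < N"
  shows "(X * Rmat N) $$ (r, c) = X $$ (r, N - 1 - c)"
proof -
  have "(X * Rmat N) $$ (r, c) = (\<Sum>l<N. X $$ (r, l) * Rmat N $$ (l, c))"
    by (rule mult_entry) (use assms in auto)
  also have "\<dots> = X $$ (r, N - 1 - c) * Rmat N $$ (N - 1 - c, c)"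
    by (rule sum_delta_gen) (use assms in auto)
  finally show ?thesis using assms by simp
qed

lemma outer_entry:
  assumes "x \<in> carrier_mat N 1" "y \<in> carrier_mat M 1" "r < N" "c < M"
  shows "(x * transpose_mat y) $$ (r, c) = x $$ (r, 0) * y $$ (c, 0)"
proof -
  have "(x * transpose_mat y) $$ (r, c) = (\<Sum>k<1. x $$ (r, k) * transpose_mat y $$ (k, c))"
    by (rule mult_entry) (use assms in auto)
  then show ?thesis using assms by simp
qed

lemma Sp_entry:
  assumes "C \<in> carrier_mat N N" "a < N" "b < N"
  shows "(transpose_mat C * Rmat N * C) $$ (a, b) = (\<Sum>k<N. C $$ (N - 1 - k, a) * C $$ (k, b))"
proof -
  have "(transpose_mat C * Rmat N * C) $$ (a, b) = (\<Sum>k<N. (transpose_mat C * Rmat N) $$ (a, k) * C $$ (k, b))"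
    by (rule mult_entry) (use assms in auto)
  also have "\<dots> = (\<Sum>k<N. C $$ (N - 1 - k, a) * C $$ (k, b))"
  proof (rule sum.cong)
    fix k assume "k \<in> {..<N}"
    then have "(transpose_mat C * Rmat N) $$ (a, k) = transpose_mat C $$ (a, N - 1 - k)"
      using assms by (intro Rmat_right) auto
    then show "(transpose_mat C * Rmat N) $$ (a, k) * C $$ (k, b) = C $$ (N - 1 - k, a) * C $$ (k, b)"
      using assms \<open>k \<in> {..<N}\<close> by simp
  qed simp
  finally show ?thesis .
qed

lemma Sp_iff:
  assumes "C \<in> carrier_mat N N"
  shows "C \<in> Sp N \<longleftrightarrow> (\<forall>a<N. \<forall>b<N. (\<Sum>k<N. C $$ (N - 1 - k, a) * C $$ (k, b)) = (if a + b + 1 = N then 1 else 0))"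
proof -
  have "C \<in> Sp N \<longleftrightarrow> transpose_mat C * Rmat N * C = Rmat N" using assms by (simp add: Sp_def)
  also have "\<dots> \<longleftrightarrow> (\<forall>a<N. \<forall>b<N. (transpose_mat C * Rmat N * C) $$ (a, b) = Rmat N $$ (a, b))"
  proof
    assume "transpose_mat C * Rmat N * C = Rmat N"
    then show "\<forall>a<N. \<forall>b<N. (transpose_mat C * Rmat N * C) $$ (a, b) = Rmat N $$ (a, b)" by simp
  next
    assume h: "\<forall>a<N. \<forall>b<N. (transpose_mat C * Rmat N * C) $$ (a, b) = Rmat N $$ (a, b)"
    have d: "dim_row (transpose_mat C * Rmat N * C) = N" "dim_col (transpose_mat C * Rmat N * C) = N"
      using assms by auto
    show "transpose_mat C * Rmat N * C = Rmat N"
      by (rule eq_matI) (use h d in auto)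
  qed
  also have "\<dots> \<longleftrightarrow> (\<forall>a<N. \<forall>b<N. (\<Sum>k<N. C $$ (N - 1 - k, a) * C $$ (k, b)) = (if a + b + 1 = N then 1 else 0))"
    using assms Sp_entry[OF assms] by (simp del: index_mult_mat)
  finally show ?thesis .
qed

lemma Vmap_carrier[simp]: "Vmap n B \<in> carrier_mat (2 * n) n"
  by (simp add: Vmap_def)

lemma Vcol:
  assumes "1 \<le> j" "j \<le> n" "r < 2 * n"
  shows "(Vmap n B * stdvec n j) $$ (r, 0) = (if j \<le> r \<and> r \<le> 2 * n - j then B $$ (r, j - 1) else 0)"
proof -
  have "(Vmap n B * stdvec n j) $$ (r, 0) = (\<Sum>k<n. Vmap n B $$ (r, k) * stdvec n j $$ (k, 0))"
    by (rule mult_entry) (use assms in auto)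
  also have "\<dots> = Vmap n B $$ (r, j - 1) * stdvec n j $$ (j - 1, 0)"
    by (rule sum_delta_gen) (use assms in auto)
  also have "\<dots> = (if j \<le> r \<and> r \<le> 2 * n - j then B $$ (r, j - 1) else 0)"
    using assms by (auto simp: Vmap_def)
  finally show ?thesis .
qed

lemma Vcol_carrier[simp]: "Vmap n B * stdvec n j \<in> carrier_mat (2 * n) 1"
  using Vmap_carrier stdvec_carrier by (metis mult_carrier_mat)

lemma Smat_entry:
  assumes v: "v \<in> carrier_mat N 1" and j: "1 \<le> j" "j \<le> N" and rc: "r < N" "c < N"
  shows "Smat N v j $$ (r, c) = (if r = c then 1 else 0) + (if c = j - 1 then v $$ (r, 0) else 0)
     + (if r = N - j then v $$ (N - 1 - c, 0) + (if c = j - 1 then v $$ (N - j, 0) else 0) else 0)"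
proof -
  define e where "e = stdvec N j"
  have ec: "e \<in> carrier_mat N 1" unfolding e_def by (rule stdvec_carrier)
  have e1: "(v * transpose_mat e) $$ (r, c) = (if c = j - 1 then v $$ (r, 0) else 0)"
    using outer_entry[OF v ec rc] rc j by (auto simp: e_def)
  have Rec: "Rmat N * e \<in> carrier_mat N 1" using ec by auto
  have Re: "(Rmat N * e) $$ (x, 0) = (if x = N - j then 1 else 0)" if "x < N" for x
    using Rmat_left[OF ec that, of 0] that j by (auto simp: e_def)
  have c2: "Rmat N * e * transpose_mat v \<in> carrier_mat N N" using Rec v by auto
  have e2: "(Rmat N * e * transpose_mat v) $$ (x, y) = (if x = N - j then v $$ (y, 0) else 0)" if "x < N" "y < N" for x y
    using outer_entry[OF Rec v that] Re[OF that(1)] by simp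
  have e3: "(Rmat N * e * transpose_mat v * Rmat N) $$ (r, c) = (if r = N - j then v $$ (N - 1 - c, 0) else 0)"
    using Rmat_right[OF c2 rc] e2[OF rc(1), of "N - 1 - c"] rc by simp
  have fc: "stdvec N (N + 1 - j) \<in> carrier_mat N 1" by (rule stdvec_carrier)
  have e4: "(stdvec N (N + 1 - j) * transpose_mat e) $$ (r, c) = (if r = N - j \<and> c = j - 1 then 1 else 0)"
    using outer_entry[OF fc ec rc] rc j by (auto simp: e_def)
  have dims: "dim_row (stdvec N (N + 1 - j) * transpose_mat e) = N" "dim_col (stdvec N (N + 1 - j) * transpose_mat e) = N"
    "dim_row (Rmat N * e * transpose_mat v * Rmat N) = N" "dim_col (Rmat N * e * transpose_mat v * Rmat N) = N"
    "dim_row (v * transpose_mat e) = N" "dim_col (v * transpose_mat e) = N"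
    using v ec by auto
  show ?thesis
    unfolding Smat_def e_def[symmetric]
    using rc dims e1 e3 e4 by (simp del: index_mult_mat add: distrib_left)
qed

definition Sf :: "nat \<Rightarrow> (nat \<Rightarrow> bit) \<Rightarrow> nat \<Rightarrow> nat \<Rightarrow> nat \<Rightarrow> bit" where
  "Sf N v m r c = (if r = c then 1 else 0) + (if c = m then v r else 0)
     + (if r = N - 1 - m then v (N - 1 - c) + (if c = m then v (N - 1 - m) else 0) else 0)"

lemma Sf_expand:
  fixes g :: "nat \<Rightarrow> bit"
  assumes "b < N" "m < N"
  shows "(\<Sum>k<N. g k * Sf N v m k b) = g b + (if b = m then (\<Sum>k<N. g k * v k) else 0)
     + g (N - 1 - m) * (v (N - 1 - b) + (if b = m then v (N - 1 - m) else 0))"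
proof -
  let ?t = "v (N - 1 - b) + (if b = m then v (N - 1 - m) else 0)"
  have "(\<Sum>k<N. g k * Sf N v m k b) = (\<Sum>k<N. (if k = b then g b else 0) + (if b = m then g k * v k else 0)
      + (if k = N - 1 - m then g (N - 1 - m) * ?t else 0))"
    by (rule sum.cong) (auto simp: Sf_def distrib_left)
  also have "\<dots> = (\<Sum>k<N. (if k = b then g b else 0)) + (\<Sum>k<N. (if b = m then g k * v k else 0))
      + (\<Sum>k<N. (if k = N - 1 - m then g (N - 1 - m) * ?t else 0))"
    by (simp add: sum.distrib)
  also have "\<dots> = g b + (if b = m then (\<Sum>k<N. g k * v k) else 0) + g (N - 1 - m) * ?t"
    using assms by simp
  finally show ?thesis .
qed

lemma Sf_flip:
  assumes "k < N" "a < N" "m < N"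
  shows "Sf N v m (N - 1 - k) a = (if k = N - 1 - a then 1 else 0) + (if a = m then v (N - 1 - k) else 0)
     + (if k = m then v (N - 1 - a) + (if a = m then v (N - 1 - m) else 0) else 0)"
proof -
  have e1: "(N - 1 - k = a) = (k = N - 1 - a)" using assms by auto
  have e2: "(N - 1 - k = N - 1 - m) = (k = m)" using assms by auto
  show ?thesis unfolding Sf_def e1 e2 by (rule refl)
qed

lemma Sf_symp:
  assumes "m < n" "N = 2 * n" "v m = 0" "(\<Sum>k<N. v (N - 1 - k) * v k) = 0" "a < N" "b < N"
  shows "(\<Sum>k<N. Sf N v m (N - 1 - k) a * Sf N v m k b) = (if a + b + 1 = N then 1 else 0)"
proof -
  have s1: "(\<Sum>k<N. Sf N v m (N - 1 - k) a * v k) = v (N - 1 - a)"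
  proof -
    have "(\<Sum>k<N. Sf N v m (N - 1 - k) a * v k) = (\<Sum>k<N. (if k = N - 1 - a then v (N - 1 - a) else 0)
       + (if a = m then v (N - 1 - k) * v k else 0) + (if k = m then 0 else 0))"
    proof (rule sum.cong)
      fix k assume k: "k \<in> {..<N}"
      have mN: "m < N" using assms by auto
      show "Sf N v m (N - 1 - k) a * v k = (if k = N - 1 - a then v (N - 1 - a) else 0)
       + (if a = m then v (N - 1 - k) * v k else 0) + (if k = m then 0 else 0)"
      proof -
        have kN: "k < N" using k by simp
        note F = Sf_flip[OF kN \<open>a < N\<close> mN, of v]
        show ?thesis unfolding F distrib_right using \<open>v m = 0\<close>
          by (cases "k = m"; cases "a = m"; cases "k = N - 1 - a"; simp)
      qed
    qed simp
    also have "\<dots> = v (N - 1 - a)"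
      using assms(3,4,5) by (cases "a = m") (simp_all add: sum.distrib)
    finally show ?thesis .
  qed
  have "(\<Sum>k<N. Sf N v m (N - 1 - k) a * Sf N v m k b) = Sf N v m (N - 1 - b) a
     + (if b = m then (\<Sum>k<N. Sf N v m (N - 1 - k) a * v k) else 0)
     + Sf N v m (N - 1 - (N - 1 - m)) a * (v (N - 1 - b) + (if b = m then v (N - 1 - m) else 0))"
    by (rule Sf_expand) (use assms in auto)
  also have "\<dots> = (if a + b + 1 = N then 1 else 0)"
  proof -
    have A: "Sf N v m (N - 1 - b) a = (if a + b + 1 = N then 1 else 0) + (if a = m then v (N - 1 - b) else 0)
       + (if b = m then v (N - 1 - a) + (if a = m then v (N - 1 - m) else 0) else 0)"
    proof -
      have e1: "(N - 1 - b = a) = (a + b + 1 = N)" using assms by auto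
      have e2: "(N - 1 - b = N - 1 - m) = (b = m)" using assms by auto
      show ?thesis unfolding Sf_def e1 e2 by (rule refl)
    qed
    have B: "Sf N v m (N - 1 - (N - 1 - m)) a = (if a = m then 1 else 0)"
      unfolding Sf_def using assms by auto
    have np: "a = m \<Longrightarrow> b = m \<Longrightarrow> a + b + 1 \<noteq> N" using assms by auto
    show ?thesis unfolding A B s1
      by (cases "a = m"; cases "b = m") (use np in \<open>simp_all add: ac_simps\<close>)
  qed
  finally show ?thesis .
qed

lemma sum_split_rev:
  fixes h :: "nat \<Rightarrow> 'a::comm_monoid_add"
  shows "(\<Sum>k<2 * n. h k) = (\<Sum>k<n. h k) + (\<Sum>k<n. h (2 * n - 1 - k))"
proof -
  have U: "{..<2 * n} = {..<n} \<union> (\<lambda>k. 2 * n - 1 - k) ` {..<n}"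
  proof -
    have "x \<in> (\<lambda>k. 2 * n - 1 - k) ` {..<n}" if "x < 2 * n" "\<not> x < n" for x
      using that by (auto simp: image_iff intro!: bexI[where x="2 * n - 1 - x"])
    then show ?thesis by auto
  qed
  have D: "{..<n} \<inter> (\<lambda>k. 2 * n - 1 - k) ` {..<n} = {}" by auto
  have I: "inj_on (\<lambda>k. 2 * n - 1 - k) {..<n}" by (auto simp: inj_on_def)
  show ?thesis unfolding U
    by (subst sum.union_disjoint) (use D I in \<open>auto simp: sum.reindex\<close>)
qed

lemma pair_sum_zero:
  fixes g :: "nat \<Rightarrow> bit"
  shows "(\<Sum>k<2 * n. g (2 * n - 1 - k) * g k) = 0"
proof -
  have "(\<Sum>k<n. g (2 * n - 1 - (2 * n - 1 - k)) * g (2 * n - 1 - k)) = (\<Sum>k<n. g (2 * n - 1 - k) * g k)"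
    by (rule sum.cong) (auto simp: mult.commute)
  then show ?thesis unfolding sum_split_rev[of _ n] by simp
qed

definition vfun :: "nat \<Rightarrow> bit mat \<Rightarrow> nat \<Rightarrow> nat \<Rightarrow> bit" where
  "vfun n B j x = (if j \<le> x \<and> x \<le> 2 * n - j then B $$ (x, j - 1) else 0)"

lemma Smat_carrier: "v \<in> carrier_mat N 1 \<Longrightarrow> Smat N v j \<in> carrier_mat N N"
  unfolding Smat_def carrier_mat_def by simp

lemma S_Sf:
  assumes "1 \<le> j" "j \<le> n" "r < 2 * n" "c < 2 * n"
  shows "Smat (2 * n) (Vmap n B * stdvec n j) j $$ (r, c) = Sf (2 * n) (vfun n B j) (j - 1) r c"
proof -
  have j: "1 \<le> j" "j \<le> 2 * n" using assms by auto
  have a1: "2 * n - 1 - c < 2 * n" "2 * n - j < 2 * n" using assms by auto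
  have a2: "2 * n - 1 - (j - 1) = 2 * n - j" using assms by auto
  show ?thesis
    unfolding Smat_entry[OF Vcol_carrier j assms(3,4)] Sf_def a2
      Vcol[OF assms(1,2,3)] Vcol[OF assms(1,2) a1(1)] Vcol[OF assms(1,2) a1(2)] vfun_def
    by (rule refl)
qed

definition LT :: "nat \<Rightarrow> bit mat \<Rightarrow> bool" where
  "LT N C = (\<forall>i<N. \<forall>j<N. (i = j \<longrightarrow> C $$ (i, j) = 1) \<and> (i < j \<longrightarrow> C $$ (i, j) = 0))"

lemma BP_iff: "C \<in> BP N \<longleftrightarrow> C \<in> carrier_mat N N \<and> LT N C \<and> C \<in> Sp N"
  unfolding BP_def LT_def by auto

lemma LT_mult:
  assumes A: "A \<in> carrier_mat N N" "LT N A" and B: "B \<in> carrier_mat N N" "LT N B"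
  shows "LT N (A * B)"
  unfolding LT_def
proof (intro allI impI conjI)
  fix i j assume ij: "i < N" "j < N"
  have e: "(A * B) $$ (i, j) = (\<Sum>k<N. A $$ (i, k) * B $$ (k, j))"
    by (rule mult_entry) (use A B ij in auto)
  {
    assume "i = j"
    have "(\<Sum>k<N. A $$ (i, k) * B $$ (k, j)) = A $$ (i, i) * B $$ (i, j)"
    proof (rule sum_delta_gen)
      fix l assume "l < N" "l \<noteq> i"
      then show "A $$ (i, l) * B $$ (l, j) = 0"
        using A(2) B(2) ij \<open>i = j\<close> unfolding LT_def by (cases "l < i") auto
    qed (use ij in auto)
    then show "(A * B) $$ (i, j) = 1" using e A(2) B(2) ij \<open>i = j\<close> unfolding LT_def by simp
  next
    assume "i < j"
    have "(\<Sum>k<N. A $$ (i, k) * B $$ (k, j)) = (\<Sum>k<N. 0)"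
    proof (rule sum.cong)
      fix l assume "l \<in> {..<N}"
      then show "A $$ (i, l) * B $$ (l, j) = 0"
        using A(2) B(2) ij \<open>i < j\<close> unfolding LT_def by (cases "l \<le> i") auto
    qed simp
    then show "(A * B) $$ (i, j) = 0" using e by simp
  }
qed

lemma Sp_mult:
  assumes A: "A \<in> carrier_mat N N" "A \<in> Sp N" and B: "B \<in> carrier_mat N N" "B \<in> Sp N"
  shows "A * B \<in> Sp N"
proof -
  have R: "Rmat N \<in> carrier_mat N N" by simp
  have At: "transpose_mat A \<in> carrier_mat N N" "transpose_mat B \<in> carrier_mat N N" using A B by auto
  have "transpose_mat (A * B) * Rmat N * (A * B) = transpose_mat B * (transpose_mat A * Rmat N * A) * B"
    using A(1) B(1) R At by (simp add: transpose_mult[OF A(1) B(1)] assoc_mult_mat[of _ N N _ N _ N] mult_carrier_mat[of _ N N _ N])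
  also have "\<dots> = transpose_mat B * Rmat N * B" using A by (simp add: Sp_def)
  also have "\<dots> = Rmat N" using B by (simp add: Sp_def)
  finally show ?thesis using A B unfolding Sp_def by auto
qed

lemma BP_mult: "A \<in> BP N \<Longrightarrow> B \<in> BP N \<Longrightarrow> A * B \<in> BP N"
  unfolding BP_iff using LT_mult Sp_mult by (meson mult_carrier_mat)

lemma one_BP: "1\<^sub>m N \<in> BP N"
  unfolding BP_iff LT_def Sp_def by simp

lemma ordprod_BP: "(\<And>j. 1 \<le> j \<Longrightarrow> j \<le> k \<Longrightarrow> F j \<in> BP N) \<Longrightarrow> ordprod N F k \<in> BP N"
  by (induction k) (auto intro: BP_mult one_BP)

lemma S_BP:
  assumes "1 \<le> j" "j \<le> n"
  shows "Smat (2 * n) (Vmap n B * stdvec n j) j \<in> BP (2 * n)"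
proof -
  let ?S = "Smat (2 * n) (Vmap n B * stdvec n j) j"
  let ?v = "vfun n B j"
  have C: "?S \<in> carrier_mat (2 * n) (2 * n)" by (rule Smat_carrier[OF Vcol_carrier])
  have vm: "?v (j - 1) = 0" using assms by (auto simp: vfun_def)
  have L: "LT (2 * n) ?S" unfolding LT_def
  proof (intro allI impI conjI)
    fix r c assume rc: "r < 2 * n" "c < 2 * n"
    note E = S_Sf[OF assms rc]
    show "?S $$ (r, c) = 1" if "r = c"
      unfolding E Sf_def using that assms rc by (auto simp: vfun_def)
    show "?S $$ (r, c) = 0" if "r < c"
      unfolding E Sf_def using that assms rc by (auto simp: vfun_def)
  qed
  have P: "?S \<in> Sp (2 * n)" unfolding Sp_iff[OF C]
  proof (intro allI impI)
    fix a b assume ab: "a < 2 * n" "b < 2 * n"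
    have "(\<Sum>k<2 * n. ?S $$ (2 * n - 1 - k, a) * ?S $$ (k, b))
       = (\<Sum>k<2 * n. Sf (2 * n) ?v (j - 1) (2 * n - 1 - k) a * Sf (2 * n) ?v (j - 1) k b)"
      by (rule sum.cong) (use assms ab in \<open>auto simp: S_Sf\<close>)
    also have "\<dots> = (if a + b + 1 = 2 * n then 1 else 0)"
      by (rule Sf_symp[where n = n]) (use assms ab vm pair_sum_zero in auto)
    finally show "(\<Sum>k<2 * n. ?S $$ (2 * n - 1 - k, a) * ?S $$ (k, b)) = (if a + b + 1 = 2 * n then 1 else 0)" .
  qed
  show ?thesis unfolding BP_iff using C L P by auto
qed

lemma BP_unique:
  assumes X: "X \<in> BP (2 * n)" and Y: "Y \<in> BP (2 * n)"
    and V: "\<And>r c. c < n \<Longrightarrow> c < r \<Longrightarrow> r \<le> 2 * n - 1 - c \<Longrightarrow> X $$ (r, c) = Y $$ (r, c)"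
  shows "X = Y"
proof -
  define N where "N = 2 * n"
  have XC: "X \<in> carrier_mat N N" and XL: "LT N X" and XS: "X \<in> Sp N"
    using X unfolding BP_iff N_def by auto
  have YC: "Y \<in> carrier_mat N N" and YL: "LT N Y" and YS: "Y \<in> Sp N"
    using Y unfolding BP_iff N_def by auto
  have XSp: "\<And>a b. a < N \<Longrightarrow> b < N \<Longrightarrow> (\<Sum>k<N. X $$ (N - 1 - k, a) * X $$ (k, b)) = (if a + b + 1 = N then 1 else 0)"
    using XS unfolding Sp_iff[OF XC] by auto
  have YSp: "\<And>a b. a < N \<Longrightarrow> b < N \<Longrightarrow> (\<Sum>k<N. Y $$ (N - 1 - k, a) * Y $$ (k, b)) = (if a + b + 1 = N then 1 else 0)"
    using YS unfolding Sp_iff[OF YC] by auto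
  have main: "\<forall>c<N. X $$ (r, c) = Y $$ (r, c)" if "r < N" for r
    using that
  proof (induction r rule: less_induct)
    case (less r)
    show ?case
    proof (intro allI impI)
      fix c assume c: "c < N"
      show "X $$ (r, c) = Y $$ (r, c)"
      proof (cases "r \<le> c")
        case True
        then show ?thesis using XL YL c less.prems unfolding LT_def
          by (cases "r = c") auto
      next
        case False
        show ?thesis
        proof (cases "c < n \<and> r \<le> N - 1 - c")
          case True
          then show ?thesis using V False N_def by auto
        next
          case F2: False
          have rbig: "r > N - 1 - c" using F2 False N_def by auto
          define j where "j = N - 1 - r"
          have j: "j < c" "j + c + 1 \<noteq> N" "j < N" "j < n" "N - 1 - j = r"
            using rbig False less.prems c N_def unfolding j_def by auto
          have split: "(\<Sum>k<N. Z $$ (N - 1 - k, j) * Z $$ (k, c))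
              = Z $$ (r, c) + (\<Sum>k\<in>{..<N} - {r}. Z $$ (N - 1 - k, j) * Z $$ (k, c))"
            if "LT N Z" for Z
          proof -
            have "(\<Sum>k<N. Z $$ (N - 1 - k, j) * Z $$ (k, c))
              = Z $$ (N - 1 - r, j) * Z $$ (r, c) + (\<Sum>k\<in>{..<N} - {r}. Z $$ (N - 1 - k, j) * Z $$ (k, c))"
              using less.prems by (subst sum.remove[of _ r]) auto
            moreover have "Z $$ (j, j) = 1" using that j(3) unfolding LT_def by blast
            ultimately show ?thesis unfolding j_def by simp
          qed
          have same: "(\<Sum>k\<in>{..<N} - {r}. X $$ (N - 1 - k, j) * X $$ (k, c))
              = (\<Sum>k\<in>{..<N} - {r}. Y $$ (N - 1 - k, j) * Y $$ (k, c))"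
          proof (rule sum.cong)
            fix k assume k: "k \<in> {..<N} - {r}"
            show "X $$ (N - 1 - k, j) * X $$ (k, c) = Y $$ (N - 1 - k, j) * Y $$ (k, c)"
            proof (cases "k < r")
              case True
              show ?thesis
              proof (cases "k < c")
                case True
                then show ?thesis using XL YL k c unfolding LT_def by auto
              next
                case False
                have "X $$ (N - 1 - k, j) = Y $$ (N - 1 - k, j)"
                  using V[of j "N - 1 - k"] j False \<open>k < r\<close> k less.prems N_def by auto
                moreover have "X $$ (k, c) = Y $$ (k, c)" using less.IH[of k] True k c less.prems by auto
                ultimately show ?thesis by simp
              qed
            next
              case False
              then have "k > r" using k by auto
              then have "N - 1 - k < j" using k j less.prems unfolding j_def by auto
              then show ?thesis using XL YL k j unfolding LT_def by auto
            qed
          qed simp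
          have "X $$ (r, c) + (\<Sum>k\<in>{..<N} - {r}. X $$ (N - 1 - k, j) * X $$ (k, c)) = 0"
            using XSp[OF j(3) c] split[OF XL] j by simp
          moreover have "Y $$ (r, c) + (\<Sum>k\<in>{..<N} - {r}. Y $$ (N - 1 - k, j) * Y $$ (k, c)) = 0"
            using YSp[OF j(3) c] split[OF YL] j by simp
          ultimately show ?thesis unfolding same by (metis add_right_cancel)
        qed
      qed
    qed
  qed
  show ?thesis
    by (rule eq_matI) (use main XC YC in auto)
qed

definition Pm :: "nat \<Rightarrow> bit mat \<Rightarrow> nat \<Rightarrow> bit mat" where
  "Pm n B m = ordprod (2 * n) (\<lambda>j. Smat (2 * n) (Vmap n B * stdvec n j) j) m"

lemma P_BP:
  assumes "m \<le> n"
  shows "Pm n B m \<in> BP (2 * n)"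
  unfolding Pm_def by (rule ordprod_BP) (use assms S_BP in auto)

lemma P_carrier: "m \<le> n \<Longrightarrow> Pm n B m \<in> carrier_mat (2 * n) (2 * n)"
  using P_BP unfolding BP_iff by auto

lemma P_step:
  assumes m: "m < n" and rc: "r < 2 * n" "c < 2 * n"
  shows "Pm n B (Suc m) $$ (r, c) = Pm n B m $$ (r, c)
     + (if c = m then (\<Sum>x<2 * n. Pm n B m $$ (r, x) * vfun n B (Suc m) x) else 0)
     + Pm n B m $$ (r, 2 * n - 1 - m) * (vfun n B (Suc m) (2 * n - 1 - c)
         + (if c = m then vfun n B (Suc m) (2 * n - 1 - m) else 0))"
proof -
  have PC: "Pm n B m \<in> carrier_mat (2 * n) (2 * n)" using P_carrier m by auto
  have SC: "Smat (2 * n) (Vmap n B * stdvec n (Suc m)) (Suc m) \<in> carrier_mat (2 * n) (2 * n)"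
    by (rule Smat_carrier[OF Vcol_carrier])
  have e0: "Pm n B (Suc m) = Pm n B m * Smat (2 * n) (Vmap n B * stdvec n (Suc m)) (Suc m)"
    unfolding Pm_def by simp
  have e1: "Pm n B (Suc m) $$ (r, c) = (\<Sum>x<2 * n. Pm n B m $$ (r, x) * Smat (2 * n) (Vmap n B * stdvec n (Suc m)) (Suc m) $$ (x, c))"
    unfolding e0 by (rule mult_entry[OF PC SC rc])
  have e2: "(\<Sum>x<2 * n. Pm n B m $$ (r, x) * Smat (2 * n) (Vmap n B * stdvec n (Suc m)) (Suc m) $$ (x, c))
     = (\<Sum>x<2 * n. Pm n B m $$ (r, x) * Sf (2 * n) (vfun n B (Suc m)) m x c)"
    by (rule sum.cong) (use m rc S_Sf[of "Suc m" n] in auto)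
  show ?thesis unfolding e1 e2 by (rule Sf_expand) (use m rc in auto)
qed

lemma P_J:
  assumes "m \<le> n"
  shows "\<forall>r l. r < 2 * n \<longrightarrow> l < 2 * n \<longrightarrow> m \<le> l \<longrightarrow> r \<le> 2 * n - 1 - m
           \<longrightarrow> Pm n B m $$ (r, l) = (if r = l then 1 else 0)"
  using assms
proof (induction m)
  case 0
  then show ?case by (simp add: Pm_def)
next
  case (Suc m)
  have IH: "\<And>r l. r < 2 * n \<Longrightarrow> l < 2 * n \<Longrightarrow> m \<le> l \<Longrightarrow> r \<le> 2 * n - 1 - m
           \<Longrightarrow> Pm n B m $$ (r, l) = (if r = l then 1 else 0)" using Suc by auto
  show ?case
  proof (intro allI impI)
    fix r l assume h: "r < 2 * n" "l < 2 * n" "Suc m \<le> l" "r \<le> 2 * n - 1 - Suc m"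
    have m: "m < n" using Suc.prems by auto
    have a: "Pm n B m $$ (r, l) = (if r = l then 1 else 0)" using IH h by auto
    have b: "Pm n B m $$ (r, 2 * n - 1 - m) = 0" using IH[of r "2 * n - 1 - m"] h m by auto
    show "Pm n B (Suc m) $$ (r, l) = (if r = l then 1 else 0)"
      unfolding P_step[OF m h(1,2)] a b using h by auto
  qed
qed

lemma P_K:
  assumes "m \<le> n"
  shows "\<forall>r c. c < n \<longrightarrow> c < r \<longrightarrow> r \<le> 2 * n - 1 - c
           \<longrightarrow> Pm n B m $$ (r, c) = (if c < m then B $$ (r, c) else 0)"
  using assms
proof (induction m)
  case 0
  then show ?case by (auto simp: Pm_def)
next
  case (Suc m)
  have IH: "\<And>r c. c < n \<Longrightarrow> c < r \<Longrightarrow> r \<le> 2 * n - 1 - c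
           \<Longrightarrow> Pm n B m $$ (r, c) = (if c < m then B $$ (r, c) else 0)" using Suc by auto
  have m: "m < n" using Suc.prems by auto
  have J: "\<And>r l. r < 2 * n \<Longrightarrow> l < 2 * n \<Longrightarrow> m \<le> l \<Longrightarrow> r \<le> 2 * n - 1 - m
           \<Longrightarrow> Pm n B m $$ (r, l) = (if r = l then 1 else 0)" using P_J[of m n B] m by auto
  show ?case
  proof (intro allI impI)
    fix r c assume h: "c < n" "c < r" "r \<le> 2 * n - 1 - c"
    have rc: "r < 2 * n" "c < 2 * n" using h by auto
    note St = P_step[OF m rc]
    consider "c < m" | "c = m" | "c > m" by linarith
    then show "Pm n B (Suc m) $$ (r, c) = (if c < Suc m then B $$ (r, c) else 0)"
    proof cases
      case 1
      have "vfun n B (Suc m) (2 * n - 1 - c) = 0" using 1 h by (auto simp: vfun_def)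
      then show ?thesis unfolding St using 1 IH[OF h] by simp
    next
      case 2
      have a: "Pm n B m $$ (r, c) = 0" using IH[OF h] 2 by simp
      have s: "(\<Sum>x<2 * n. Pm n B m $$ (r, x) * vfun n B (Suc m) x) = Pm n B m $$ (r, r) * vfun n B (Suc m) r"
      proof (rule sum_delta_gen)
        fix x assume x: "x < 2 * n" "x \<noteq> r"
        show "Pm n B m $$ (r, x) * vfun n B (Suc m) x = 0"
        proof (cases "Suc m \<le> x \<and> x \<le> 2 * n - Suc m")
          case True
          then have "Pm n B m $$ (r, x) = 0" using J[of r x] x rc h 2 by auto
          then show ?thesis by simp
        qed (auto simp: vfun_def)
      qed (use rc in auto)
      have d: "Pm n B m $$ (r, r) = 1" using J[of r r] rc h 2 by auto
      have v: "vfun n B (Suc m) r = B $$ (r, c)" using h 2 by (auto simp: vfun_def)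
      show ?thesis unfolding St a s d v using 2 by simp
    next
      case 3
      have a: "Pm n B m $$ (r, c) = 0" using IH[OF h] 3 by simp
      have b: "Pm n B m $$ (r, 2 * n - 1 - m) = 0" using J[of r "2 * n - 1 - m"] h 3 m by auto
      show ?thesis unfolding St a b using 3 by simp
    qed
  qed
qed

theorem theorem1:
  fixes n :: nat and B :: "bit mat"
  assumes "B \<in> BP (2 * n)"
  shows "B = ordprod (2 * n) (\<lambda>j. Smat (2 * n) (Vmap n B * stdvec n j) j) n"
proof -
  have "B = Pm n B n"
  proof (rule BP_unique[OF assms P_BP])
    fix r c assume "c < n" "c < r" "r \<le> 2 * n - 1 - c"
    then show "B $$ (r, c) = Pm n B n $$ (r, c)" using P_K[of n n B] by auto
  qed simp
  then show ?thesis unfolding Pm_def .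
qed

end
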